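(* Let $\Omega>0$ denote the maximum absolute value of the stored quantities, let $C,D$ be column indices of $X\in\mathbb{R}^{K\times d}$ to be compared and $E$ a target column index. Then there exists a single transformer layer that simulates the comparison operation $X[:,E]\leftarrow (X[:,C]<X[:,D])$, i.e. it writes into each entry of column $E$ the value $1$ if the corresponding entry of column $C$ is less than that of column $D$, and $0$ otherwise.
   Context: Conventions: rows/columns indexed from $1$; $X[i,j]$ is the $(i,j)$ entry, $X[:,j]$ the $j$-th column. $\phi(x)=\max\{x,0\}$ entrywise. Hardmax $\sigma$: row $i$ of $\sigma(\Phi)$ is $\frac{1}{|S_i|}\sum_{k\in S_i}e_k$, $S_i=\{k:\Phi_{ik}=\max_j\Phi_{ij}\}$. For a weighted hypergraph with incident matrix $A\in\mathbb{R}^{n_v\times n_e}$ ($A_{ij}=w(e_j)$ if vertex $v_i\in e_j$, else $0$) and $K\ge\max\{n_v,n_e\}+1$, the padded incident matrix $\widetilde A\in\mathbb{R}^{K\times K}$ has $\widetilde A_{i+1,j+1}=A_{ij}$, zeros elsewhere. A transformer layer on $X\in\mathbb{R}^{K\times d}$ is $f(X,\widetilde A)=f_{\mathrm{mlp}}(f_{\mathrm{attn}}(X,\widetilde A))$, $f_{\mathrm{attn}}(X,\widetilde A)=\sum_{i\in M_A}\psi^{(i)}(X,\widetilde A)+\sum_{i\in M_{A^\top}}\psi^{(i)}(X,\widetilde A^\top)+\sum_{i\in M}\psi^{(i)}(X,I_K)+X$, $\psi(X,B)=B\,\sigma(XW_QW_K^\top X^\top)XW_V$ ($W_Q,W_K\in\mathbb{R}^{d\times2}$,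 $W_V\in\mathbb{R}^{d\times d}$), $f_{\mathrm{mlp}}(X)=Z^{(4)}W^{(4)}+X$, $Z^{(1)}=X$, $Z^{(j+1)}=\phi(Z^{(j)}W^{(j)})$ ($j=1,2,3$). Storage convention: scalars in the top row of a column (rest $0$), arrays of length $K-1$ in rows $2,\dots,K$ (top $0$); designated columns $B_{\mathrm{global}}$ (top $1$, rest $0$), $B_{\mathrm{local}}$ (top $0$, rest $1$), and scratchpad columns. "Simulating an operation" means the layer's weights can be chosen so that applying it to $X$ performs the stated update. *)

theory Defs
  imports "Jordan_Normal_Form.Matrix"
begin

text \<open>Matrices are Jordan_Normal_Form matrices, indexed from 0 (row/column 1 of the
paper is index 0 here).\<close>

definition relu_mat :: "real mat \<Rightarrow> real mat" where
  "relu_mat Z = map_mat (\<lambda>x. max x 0) Z"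

definition hardmax :: "real mat \<Rightarrow> real mat" where
  "hardmax P = mat (dim_row P) (dim_col P) (\<lambda>(i,j).
     (let S = {k. k < dim_col P \<and> P $$ (i,k) = Max {P $$ (i,l) | l. l < dim_col P}}
      in if j \<in> S then 1 / real (card S) else 0))"

definition psi :: "real mat \<Rightarrow> real mat \<Rightarrow> real mat \<times> real mat \<times> real mat \<Rightarrow> real mat" where
  "psi X B h = (case h of (WQ, WK, WV) \<Rightarrow>
      B * hardmax (X * WQ * transpose_mat WK * transpose_mat X) * X * WV)"

definition sum_heads :: "real mat \<Rightarrow> real mat \<Rightarrow> (real mat \<times> real mat \<times> real mat) list \<Rightarrow> real mat" where
  "sum_heads X B hs = foldr (\<lambda>h acc. psi X B h + acc) hs (0\<^sub>m (dim_row X) (dim_col X))"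

definition f_attn :: "(real mat \<times> real mat \<times> real mat) list \<Rightarrow> (real mat \<times> real mat \<times> real mat) list
   \<Rightarrow> (real mat \<times> real mat \<times> real mat) list \<Rightarrow> real mat \<Rightarrow> real mat \<Rightarrow> real mat" where
  "f_attn HA HAT HI X At =
     sum_heads X At HA + sum_heads X (transpose_mat At) HAT + sum_heads X (1\<^sub>m (dim_row X)) HI + X"

definition f_mlp :: "real mat \<Rightarrow> real mat \<Rightarrow> real mat \<Rightarrow> real mat \<Rightarrow> real mat \<Rightarrow> real mat" where
  "f_mlp W1 W2 W3 W4 X = relu_mat (relu_mat (relu_mat (X * W1) * W2) * W3) * W4 + X"

definition tf_layer where
  "tf_layer HA HAT HI W1 W2 W3 W4 X At = f_mlp W1 W2 W3 W4 (f_attn HA HAT HI X At)"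

definition head_ok :: "nat \<Rightarrow> real mat \<times> real mat \<times> real mat \<Rightarrow> bool" where
  "head_ok d h = (case h of (WQ, WK, WV) \<Rightarrow>
      WQ \<in> carrier_mat d 2 \<and> WK \<in> carrier_mat d 2 \<and> WV \<in> carrier_mat d d)"

text \<open>Padded incidence matrix of a weighted hypergraph with n_v vertices and n_e edges,
 membership relation inc (vertex i in edge j, 1-based) and weights w.
 Paper entry (i+1,j+1) = A_ij, i.e. 0-based entry (i,j) for 1 <= i <= n_v, 1 <= j <= n_e.\<close>
definition padded_incidence :: "nat \<Rightarrow> nat \<Rightarrow> nat \<Rightarrow> (nat \<Rightarrow> nat \<Rightarrow> bool) \<Rightarrow> (nat \<Rightarrow> real) \<Rightarrow> real mat" where
  "padded_incidence K nv ne inc w = mat K K (\<lambda>(i,j).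
      if 1 \<le> i \<and> i \<le> nv \<and> 1 \<le> j \<and> j \<le> ne \<and> inc i j then w j else 0)"

definition compare_op :: "nat \<Rightarrow> nat \<Rightarrow> nat \<Rightarrow> real mat \<Rightarrow> real mat" where
  "compare_op C D E X = mat (dim_row X) (dim_col X) (\<lambda>(i,j).
      if j = E then (if X $$ (i,C) < X $$ (i,D) then 1 else 0) else X $$ (i,j))"

end

theory Submission
  imports Defs
begin

lemma mult_entry:
  assumes "A \<in> carrier_mat n m" "B \<in> carrier_mat m p" "i < n" "j < p"
  shows "(A * B) $$ (i, j) = (\<Sum>l<m. A $$ (i, l) * B $$ (l, j))"
  using assms by (auto simp: index_mult_mat scalar_prod_def lessThan_atLeast0 intro!: sum.cong)

lemma sum_delta_r:
  "(\<Sum>l<(m::nat). f l * (if l = a then c else 0)) = (if a < m then f a * c else (0::real))"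
proof -
  have "(\<Sum>l<m. f l * (if l = a then c else 0)) = (\<Sum>l<m. if l = a then f a * c else 0)"
    by (rule sum.cong) auto
  also have "\<dots> = (if a \<in> {..<m} then f a * c else 0)"
    by (rule sum.delta) simp
  finally show ?thesis by simp
qed

lemma sum_4: "(\<Sum>r<(4::nat). f r) = f 0 + f 1 + f 2 + (f 3 :: real)"
  by (simp add: eval_nat_numeral)

definition hv :: "nat \<Rightarrow> real \<Rightarrow> real" where
  "hv K x = (if x > 0 then 1 else if x < 0 then 0 else 1 / real K)"

lemma hardmax_0:
  assumes "P \<in> carrier_mat K K" "K \<ge> 2" "i < K"
    and "\<And>k. k < K \<Longrightarrow> P $$ (i,k) = x * (if k = 0 then 1 else -1)"
  shows "hardmax P $$ (i, 0) = hv K x"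
proof -
  let ?f = "\<lambda>k. x * (if k = 0 then 1 else -1 :: real)"
  have dims: "dim_row P = K" "dim_col P = K" using assms(1) by auto
  have setq: "{P $$ (i,l) | l. l < K} = ?f ` {..<K}"
  proof -
    have "{P $$ (i,l) | l. l < K} = (\<lambda>l. P $$ (i,l)) ` {..<K}"
      by blast
    also have "\<dots> = ?f ` {..<K}"
      by (rule image_cong) (auto simp: assms(4))
    finally show ?thesis .
  qed
  have Seq: "{k. k < dim_col P \<and> P $$ (i,k) = Max {P $$ (i,l) | l. l < dim_col P}}
     = {k. k < K \<and> ?f k = Max (?f ` {..<K})}"
    unfolding dims unfolding setq by (intro Collect_cong conj_cong refl) (simp add: assms(4))
  have h: "hardmax P $$ (i, 0) = (let S = {k. k < K \<and> ?f k = Max (?f ` {..<K})}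
      in if 0 \<in> S then 1 / real (card S) else 0)"
    unfolding hardmax_def Seq[symmetric] using assms(2,3) dims by simp
  show ?thesis
  proof (cases "x > 0")
    case True
    have "Max (?f ` {..<K}) = x"
      by (rule Max_eqI) (use True assms in auto)
    moreover have "{k. k < K \<and> ?f k = x} = {0}" using True assms by auto
    ultimately show ?thesis using h True by (simp add: hv_def)
  next
    case False
    show ?thesis
    proof (cases "x < 0")
      case True
      have "Max (?f ` {..<K}) = -x"
        by (rule Max_eqI) (use True assms in \<open>auto intro!: image_eqI[where x=1]\<close>)
      then show ?thesis using h True by (simp add: hv_def)
    next
      case F2: False
      then have x0: "x = 0" using False by auto
      have "Max (?f ` {..<K}) = 0"
        by (rule Max_eqI) (use x0 assms in \<open>auto intro!: image_eqI[where x=0]\<close>)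
      moreover have "{k. k < K \<and> ?f k = 0} = {..<K}" using x0 by auto
      ultimately show ?thesis using h x0 assms by (simp add: hv_def)
    qed
  qed
qed


lemma sum_2: "(\<Sum>r<(2::nat). f r) = f 0 + (f 1 :: real)"
  by (simp add: eval_nat_numeral)

lemma sum_e2:
  assumes "a < m" "b < m"
  shows "(\<Sum>l<(m::nat). g l * ((if l = a then 1 else 0) - (if l = b then 1 else 0))) = g a - (g b::real)"
proof -
  have "(\<Sum>l<m. g l * ((if l = a then 1 else 0) - (if l = b then 1 else 0)))
     = (\<Sum>l<m. g l * (if l = a then 1 else 0)) - (\<Sum>l<m. g l * (if l = b then 1 else 0))"
    by (simp add: right_diff_distrib sum_subtractf)
  then show ?thesis using assms by (simp only: sum_delta_r) simp
qed

lemma sum_e3: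
  assumes "a < m" "b < m" "c < m"
  shows "(\<Sum>l<(m::nat). g l * ((if l = a then p else 0) - (if l = b then q else 0) - (if l = c then r else 0)))
     = g a * p - g b * q - (g c::real) * r"
proof -
  have "(\<Sum>l<m. g l * ((if l = a then p else 0) - (if l = b then q else 0) - (if l = c then r else 0)))
     = (\<Sum>l<m. g l * (if l = a then p else 0)) - (\<Sum>l<m. g l * (if l = b then q else 0))
       - (\<Sum>l<m. g l * (if l = c then r else 0))"
    by (simp add: right_diff_distrib sum_subtractf)
  then show ?thesis using assms by (simp only: sum_delta_r) simp
qed

lemma relu_relu: "relu_mat (relu_mat A) = relu_mat A"
  unfolding relu_mat_def by (rule eq_matI) auto

lemma relu_carrier: "A \<in> carrier_mat n m \<Longrightarrow> relu_mat A \<in> carrier_mat n m"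
  unfolding relu_mat_def by simp

theorem lemmaC3:
  fixes \<Omega> :: real and K d C D E gl lo :: nat and Scr :: "nat set"
  assumes "\<Omega> > 0"
    and "C < d" and "D < d" and "E < d" and "gl < d" and "lo < d"
    and "Scr \<noteq> {}" and "Scr \<subseteq> {..<d}"
    and "gl \<noteq> lo" and "gl \<notin> Scr" and "lo \<notin> Scr"
    and "E \<noteq> gl" and "E \<noteq> lo" and "E \<notin> Scr"
  shows "\<exists>HA HAT HI W1 W2 W3 W4 h1 h2 h3.
     (\<forall>h\<in>set HA. head_ok d h) \<and> (\<forall>h\<in>set HAT. head_ok d h) \<and> (\<forall>h\<in>set HI. head_ok d h) \<and>
     W1 \<in> carrier_mat d h1 \<and> W2 \<in> carrier_mat h1 h2 \<and> W3 \<in> carrier_mat h2 h3 \<and>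
     W4 \<in> carrier_mat h3 d \<and>
     (\<forall>X nv ne inc w.
        X \<in> carrier_mat K d \<and>
        1 \<le> nv \<and> max nv ne + 1 \<le> K \<and>
        (\<forall>i<K. \<forall>j<d. \<bar>X $$ (i,j)\<bar> \<le> \<Omega>) \<and>
        (\<forall>i<K. X $$ (i,gl) = (if i = 0 then 1 else 0)) \<and>
        (\<forall>i<K. X $$ (i,lo) = (if i = 0 then 0 else 1)) \<and>
        (\<forall>s\<in>Scr. \<forall>i<K. X $$ (i,s) = 0)
        \<longrightarrow> tf_layer HA HAT HI W1 W2 W3 W4 X (padded_incidence K nv ne inc w)
              = compare_op C D E X)"
proof -
  obtain s where s: "s \<in> Scr" using assms by auto
  have sd: "s < d" using assms s by auto
  have sE: "s \<noteq> E" "s \<noteq> gl" "s \<noteq> lo" using assms s by auto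
  define WQ :: "real mat" where "WQ = mat d 2 (\<lambda>(l,j). if j = 1 then
      (if l = D then 1 else 0) - (if l = C then 1 else 0) else 0)"
  define WK :: "real mat" where "WK = mat d 2 (\<lambda>(l,j). if j = 1 then
      (if l = gl then 1 else 0) - (if l = lo then 1 else 0) else 0)"
  define WV :: "real mat" where "WV = mat d d (\<lambda>(l,j). if l = gl \<and> j = s then 1 else 0)"
  define W1 :: "real mat" where "W1 = mat d 4 (\<lambda>(l,r).
      if r = 0 then (if l = E then 1 else 0) else if r = 1 then (if l = E then -1 else 0)
      else if r = 2 then (if l = s then 1 else 0)
      else (if l = s then 1 else 0) - (if l = gl then 1 / real K else 0) - (if l = lo then 1 / real K else 0))"
  define W4 :: "real mat" where "W4 = mat 4 d (\<lambda>(r,j).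
      if r = 0 then (if j = E then -1 else 0) else if r = 1 then (if j = E then 1 else 0)
      else if r = 2 then (if j = s then -1 else 0)
      else (if j = E then real K / (real K - 1) else 0))"
  have main: "\<forall>X nv ne inc w.
        X \<in> carrier_mat K d \<and>
        1 \<le> nv \<and> max nv ne + 1 \<le> K \<and>
        (\<forall>i<K. \<forall>j<d. \<bar>X $$ (i,j)\<bar> \<le> \<Omega>) \<and>
        (\<forall>i<K. X $$ (i,gl) = (if i = 0 then 1 else 0)) \<and>
        (\<forall>i<K. X $$ (i,lo) = (if i = 0 then 0 else 1)) \<and>
        (\<forall>s\<in>Scr. \<forall>i<K. X $$ (i,s) = 0)
        \<longrightarrow> tf_layer [] [] [(WQ, WK, WV)] W1 (1\<^sub>m 4) (1\<^sub>m 4) W4 X (padded_incidence K nv ne inc w)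
              = compare_op C D E X"
  proof (intro allI impI)
    fix X nv ne inc w
    assume H: "X \<in> carrier_mat K d \<and>
        1 \<le> nv \<and> max nv ne + 1 \<le> K \<and>
        (\<forall>i<K. \<forall>j<d. \<bar>X $$ (i,j)\<bar> \<le> \<Omega>) \<and>
        (\<forall>i<K. X $$ (i,gl) = (if i = 0 then 1 else 0)) \<and>
        (\<forall>i<K. X $$ (i,lo) = (if i = 0 then 0 else 1)) \<and>
        (\<forall>s\<in>Scr. \<forall>i<K. X $$ (i,s) = 0)"
    have Xc: "X \<in> carrier_mat K d" using H by blast
    have K2: "K \<ge> 2" using H by auto
    have Xgl: "\<And>i. i < K \<Longrightarrow> X $$ (i,gl) = (if i = 0 then 1 else 0)" using H by blast
    have Xlo: "\<And>i. i < K \<Longrightarrow> X $$ (i,lo) = (if i = 0 then 0 else 1)" using H by blast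
    have Xs: "\<And>i. i < K \<Longrightarrow> X $$ (i,s) = 0" using H s by blast
    define \<delta> where "\<delta> i = X $$ (i,D) - X $$ (i,C)" for i
    have WQc: "WQ \<in> carrier_mat d 2" and WKc: "WK \<in> carrier_mat d 2" and WVc: "WV \<in> carrier_mat d d"
      and W1c: "W1 \<in> carrier_mat d 4" and W4c: "W4 \<in> carrier_mat 4 d"
      by (simp_all add: WQ_def WK_def WV_def W1_def W4_def)
    have Qc: "X * WQ \<in> carrier_mat K 2" using Xc WQc by simp
    have Q: "(X * WQ) $$ (i,j) = (if j = 1 then \<delta> i else 0)" if "i < K" "j < 2" for i j
    proof -
      have "(X * WQ) $$ (i,j) = (\<Sum>l<d. X $$ (i,l) * WQ $$ (l,j))"
        by (rule mult_entry[OF Xc WQc that])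
      also have "\<dots> = (\<Sum>l<d. X $$ (i,l) * (if j = 1 then
           (if l = D then 1 else 0) - (if l = C then 1 else 0) else 0))"
        by (rule sum.cong) (use that in \<open>auto simp: WQ_def\<close>)
      also have "\<dots> = (if j = 1 then \<delta> i else 0)"
        using sum_e2[of D d C "\<lambda>l. X $$ (i,l)"] assms by (auto simp: \<delta>_def)
      finally show ?thesis .
    qed
    have Rc: "X * WQ * transpose_mat WK \<in> carrier_mat K d" using Qc WKc by simp
    have R: "(X * WQ * transpose_mat WK) $$ (i,l) =
       \<delta> i * ((if l = gl then 1 else 0) - (if l = lo then 1 else 0))" if "i < K" "l < d" for i l
    proof -
      have "(X * WQ * transpose_mat WK) $$ (i,l) = (\<Sum>j<2. (X * WQ) $$ (i,j) * transpose_mat WK $$ (j,l))"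
        by (rule mult_entry[OF Qc _ that]) (use WKc in simp)
      also have "\<dots> = \<delta> i * ((if l = gl then 1 else 0) - (if l = lo then 1 else 0))"
        unfolding sum_2 using that WKc by (simp add: Q WK_def)
      finally show ?thesis .
    qed
    define P where "P = X * WQ * transpose_mat WK * transpose_mat X"
    have Pc: "P \<in> carrier_mat K K" unfolding P_def using Rc Xc by simp
    have Pe: "P $$ (i,k) = \<delta> i * (if k = 0 then 1 else -1)" if "i < K" "k < K" for i k
    proof -
      have "P $$ (i,k) = (\<Sum>l<d. (X * WQ * transpose_mat WK) $$ (i,l) * transpose_mat X $$ (l,k))"
        unfolding P_def by (rule mult_entry[OF Rc _ that]) (use Xc in simp)
      also have "\<dots> = (\<Sum>l<d. X $$ (k,l) * (\<delta> i * ((if l = gl then 1 else 0) - (if l = lo then 1 else 0))))"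
        by (rule sum.cong) (use that Xc in \<open>auto simp: R\<close>)
      also have "\<dots> = (\<Sum>l<d. (\<delta> i * X $$ (k,l)) * ((if l = gl then 1 else 0) - (if l = lo then 1 else 0)))"
        by (simp add: algebra_simps)
      also have "\<dots> = \<delta> i * X $$ (k,gl) - \<delta> i * X $$ (k,lo)"
        by (rule sum_e2) (use assms in auto)
      also have "\<dots> = \<delta> i * (if k = 0 then 1 else -1)"
        using that by (simp add: Xgl Xlo)
      finally show ?thesis .
    qed
    define Hm where "Hm = hardmax P"
    have Hc: "Hm \<in> carrier_mat K K" using Pc by (simp add: Hm_def hardmax_def)
    have H0: "Hm $$ (i,0) = hv K (\<delta> i)" if "i < K" for i
      unfolding Hm_def by (rule hardmax_0[OF Pc K2 that]) (simp add: Pe that)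
    have HXc: "Hm * X \<in> carrier_mat K d" using Hc Xc by simp
    have HX: "(Hm * X) $$ (i,gl) = hv K (\<delta> i)" if "i < K" for i
    proof -
      have "(Hm * X) $$ (i,gl) = (\<Sum>k<K. Hm $$ (i,k) * X $$ (k,gl))"
        by (rule mult_entry[OF Hc Xc that]) (use assms in simp)
      also have "\<dots> = (\<Sum>k<K. Hm $$ (i,k) * (if k = 0 then 1 else 0))"
        by (rule sum.cong) (auto simp: Xgl)
      also have "\<dots> = hv K (\<delta> i)" using K2 by (simp add: sum_delta_r H0 that)
      finally show ?thesis .
    qed
    have psiM: "psi X (1\<^sub>m K) (WQ, WK, WV) = mat K d (\<lambda>(i,j). if j = s then hv K (\<delta> i) else 0)"
    proof -
      have "psi X (1\<^sub>m K) (WQ, WK, WV) = Hm * X * WV"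
      proof -
        have e: "1\<^sub>m K * hardmax P = hardmax P" using Hc unfolding Hm_def by simp
        show ?thesis unfolding psi_def Hm_def using e by (simp add: P_def)
      qed
      also have "\<dots> = mat K d (\<lambda>(i,j). if j = s then hv K (\<delta> i) else 0)"
      proof (rule eq_matI)
        fix i j assume ij: "i < dim_row (mat K d (\<lambda>(i,j). if j = s then hv K (\<delta> i) else 0))"
          "j < dim_col (mat K d (\<lambda>(i,j). if j = s then hv K (\<delta> i) else 0))"
        then have ij': "i < K" "j < d" by auto
        have "(Hm * X * WV) $$ (i,j) = (\<Sum>l<d. (Hm * X) $$ (i,l) * WV $$ (l,j))"
          by (rule mult_entry[OF HXc WVc ij'])
        also have "\<dots> = (\<Sum>l<d. (Hm * X) $$ (i,l) * (if l = gl then (if j = s then 1 else 0) else 0))"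
          by (rule sum.cong) (use ij' in \<open>auto simp: WV_def\<close>)
        also have "\<dots> = (if j = s then hv K (\<delta> i) else 0)"
          using assms ij' by (simp add: sum_delta_r HX)
        finally show "(Hm * X * WV) $$ (i,j) = mat K d (\<lambda>(i,j). if j = s then hv K (\<delta> i) else 0) $$ (i,j)"
          using ij' by simp
      qed (use HXc WVc in auto)
      finally show ?thesis .
    qed
    define Y where "Y = mat K d (\<lambda>(i,j). X $$ (i,j) + (if j = s then hv K (\<delta> i) else 0))"
    have attn: "f_attn [] [] [(WQ, WK, WV)] X (padded_incidence K nv ne inc w) = Y"
      unfolding f_attn_def sum_heads_def Y_def using Xc psiM
      by (intro eq_matI) auto
    have Yc: "Y \<in> carrier_mat K d" by (simp add: Y_def)
    show "tf_layer [] [] [(WQ, WK, WV)] W1 (1\<^sub>m 4) (1\<^sub>m 4) W4 X (padded_incidence K nv ne inc w)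
              = compare_op C D E X"
    proof -
      have Yi: "Y $$ (i,l) = X $$ (i,l) + (if l = s then hv K (\<delta> i) else 0)" if "i < K" "l < d" for i l
        using that by (simp add: Y_def)
      have hv0: "hv K x \<ge> 0" for x by (simp add: hv_def)
      have YW: "(Y * W1) $$ (i,r) = (\<Sum>l<d. Y $$ (i,l) * W1 $$ (l,r))" if "i < K" "r < 4" for i r
        by (rule mult_entry[OF Yc W1c that])
      define Z where "Z = relu_mat (Y * W1)"
      have Zc: "Z \<in> carrier_mat K 4" unfolding Z_def using Yc W1c by (intro relu_carrier) simp
      have Z0: "Z $$ (i,0) = max (X $$ (i,E)) 0" if "i < K" for i
      proof -
        have "(Y * W1) $$ (i,0) = (\<Sum>l<d. Y $$ (i,l) * (if l = E then 1 else 0))"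
          using YW[of i 0] that by (simp only: numeral_less_iff zero_less_numeral one_less_numeral_iff semiring_norm) (rule sum.cong, auto simp: W1_def)
        also have "\<dots> = X $$ (i,E)" using assms sE that by (simp add: sum_delta_r Yi)
        finally show ?thesis unfolding Z_def relu_mat_def using that Yc W1c by simp
      qed
      have Z1: "Z $$ (i,1) = max (- X $$ (i,E)) 0" if "i < K" for i
      proof -
        have "(Y * W1) $$ (i,1) = (\<Sum>l<d. Y $$ (i,l) * (if l = E then -1 else 0))"
          using YW[of i 1] that by (simp only: numeral_less_iff zero_less_numeral one_less_numeral_iff semiring_norm) (rule sum.cong, auto simp: W1_def)
        also have "\<dots> = - X $$ (i,E)" using assms sE that by (simp add: sum_delta_r Yi)
        finally show ?thesis unfolding Z_def relu_mat_def using that Yc W1c by simp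
      qed
      have Z2: "Z $$ (i,2) = hv K (\<delta> i)" if "i < K" for i
      proof -
        have "(Y * W1) $$ (i,2) = (\<Sum>l<d. Y $$ (i,l) * (if l = s then 1 else 0))"
          using YW[of i 2] that by (simp only: numeral_less_iff zero_less_numeral one_less_numeral_iff semiring_norm) (rule sum.cong, auto simp: W1_def)
        also have "\<dots> = hv K (\<delta> i)" using sd that by (simp add: sum_delta_r Yi Xs)
        finally show ?thesis unfolding Z_def relu_mat_def using that Yc W1c hv0 by simp
      qed
      have Z3: "Z $$ (i,3) = max (hv K (\<delta> i) - 1 / real K) 0" if "i < K" for i
      proof -
        have "(Y * W1) $$ (i,3) = (\<Sum>l<d. Y $$ (i,l) * ((if l = s then 1 else 0)
           - (if l = gl then 1 / real K else 0) - (if l = lo then 1 / real K else 0)))"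
          using YW[of i 3] that by (simp only: numeral_less_iff zero_less_numeral one_less_numeral_iff semiring_norm) (rule sum.cong, auto simp: W1_def)
        also have "\<dots> = Y $$ (i,s) * 1 - Y $$ (i,gl) * (1 / real K) - Y $$ (i,lo) * (1 / real K)"
          by (rule sum_e3) (use sd assms in auto)
        also have "\<dots> = hv K (\<delta> i) - 1 / real K"
          using sd sE that assms by (simp add: Yi Xs Xgl Xlo add_divide_distrib[symmetric])
        finally show ?thesis unfolding Z_def relu_mat_def using that Yc W1c by simp
      qed
      have "tf_layer [] [] [(WQ, WK, WV)] W1 (1\<^sub>m 4) (1\<^sub>m 4) W4 X (padded_incidence K nv ne inc w)
          = Z * W4 + Y"
      proof -
        have "relu_mat (Z * 1\<^sub>m 4) = Z" using Zc by (simp add: Z_def relu_relu)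
        then show ?thesis unfolding tf_layer_def attn f_mlp_def Z_def[symmetric] by simp
      qed
      also have "\<dots> = compare_op C D E X"
      proof (rule eq_matI)
        fix i j assume "i < dim_row (compare_op C D E X)" "j < dim_col (compare_op C D E X)"
        then have ij: "i < K" "j < d" using Xc by (auto simp: compare_op_def)
        have "(Z * W4 + Y) $$ (i,j) = (\<Sum>r<4. Z $$ (i,r) * W4 $$ (r,j)) + Y $$ (i,j)"
          using ij Zc W4c Yc by (simp add: mult_entry[OF Zc W4c ij])
        also have "\<dots> = compare_op C D E X $$ (i,j)"
        proof -
          have K1: "real K - 1 > 0" using K2 by simp
          have e1: "real K / (real K - 1) * (1 - 1 / real K) = 1"
            using K1 K2 by (simp add: field_simps)
          have W4e: "W4 $$ (0,j) = (if j = E then -1 else 0)" "W4 $$ (1,j) = (if j = E then 1 else 0)"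
            "W4 $$ (2,j) = (if j = s then -1 else 0)" "W4 $$ (3,j) = (if j = E then real K / (real K - 1) else 0)"
            using ij by (simp_all add: W4_def)
          have sm: "(\<Sum>r<4. Z $$ (i,r) * W4 $$ (r,j)) + Y $$ (i,j) =
             max (X $$ (i,E)) 0 * (if j = E then -1 else 0) + max (- X $$ (i,E)) 0 * (if j = E then 1 else 0)
             + hv K (\<delta> i) * (if j = s then -1 else 0)
             + max (hv K (\<delta> i) - 1 / real K) 0 * (if j = E then real K / (real K - 1) else 0)
             + (X $$ (i,j) + (if j = s then hv K (\<delta> i) else 0))"
            unfolding sum_4 W4e Z0[OF ij(1)] Z1[OF ij(1)] Z2[OF ij(1)] Z3[OF ij(1)] Yi[OF ij] by simp
          have cmp: "compare_op C D E X $$ (i,j) =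
              (if j = E then (if X $$ (i,C) < X $$ (i,D) then 1 else 0) else X $$ (i,j))"
            using ij Xc by (simp add: compare_op_def)
          have K0: "1 / real K > 0" using K2 by simp
          have m0: "- max x 0 + max (- x) 0 + x = 0" for x :: real by (simp add: max_def)
          show ?thesis
          proof (cases "j = E")
            case True
            then have "j \<noteq> s" using sE by auto
            then have "(\<Sum>r<4. Z $$ (i,r) * W4 $$ (r,j)) + Y $$ (i,j) =
              (- max (X $$ (i,E)) 0 + max (- X $$ (i,E)) 0 + X $$ (i,E))
              + max (hv K (\<delta> i) - 1 / real K) 0 * (real K / (real K - 1))"
              unfolding sm using True by simp
            also have "\<dots> = (if X $$ (i,C) < X $$ (i,D) then 1 else 0)"
              unfolding m0 using K0 e1 by (auto simp: hv_def \<delta>_def max_def mult.commute)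
            finally show ?thesis using cmp True by simp
          next
            case False
            then show ?thesis unfolding sm cmp using ij Xs by auto
          qed
        qed
        finally show "(Z * W4 + Y) $$ (i,j) = compare_op C D E X $$ (i,j)" .
      qed (use Zc W4c Yc Xc in \<open>auto simp: compare_op_def\<close>)
      finally show ?thesis .
    qed
  qed
  show ?thesis
    apply (rule exI[where x="[]"], rule exI[where x="[]"], rule exI[where x="[(WQ,WK,WV)]"],
       rule exI[where x=W1], rule exI[where x="1\<^sub>m 4"], rule exI[where x="1\<^sub>m 4"], rule exI[where x=W4],
       rule exI[where x=4], rule exI[where x=4], rule exI[where x=4])
    using main by (simp add: head_ok_def WQ_def WK_def WV_def W1_def W4_def)
qed

end
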